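(* Let $g \in L^2(\mathbb{R}^d,\mathbb{R})$ be a real-valued window function and suppose that $\mathcal{L} \subseteq \mathbb{R}^{2d}$ satisfies one of the following two conditions: (1) $\mathcal{L} = \Lambda \times \mathbb{R}^d$ with $\Lambda$ a lattice in $\mathbb{R}^d$; (2) $\mathcal{L}$ is a separable lattice, i.e. $\mathcal{L}=\mathcal{A}\times\mathcal{B}$ with $\mathcal{A},\mathcal{B}$ lattices in $\mathbb{R}^d$. Then there exist two real-valued functions $f_1,f_2 \in L^2(\mathbb{R}^d,\mathbb{R})$ such that $|V_g f_1(z)| = |V_g f_2(z)|$ for all $z \in \mathcal{L}$ and $f_1\neq f_2$, $f_1\neq -f_2$ (equivalently, there is no $\nu\in\mathbb{C}$ with $|\nu|=1$ and $f_1=\nu f_2$).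
   Context: $V_gf(x,\omega)=\int_{\mathbb{R}^d} f(t)\overline{g(t-x)}e^{-2\pi i \omega\cdot t}\,dt$ is the short-time Fourier transform. A lattice in $\mathbb{R}^d$ is $A\mathbb{Z}^d$ with $A\in\mathrm{GL}_d(\mathbb{R})$. $L^2(\mathbb{R}^d,\mathbb{R})$ denotes the real-valued functions in $L^2(\mathbb{R}^d)$. *)

theory Defs
  imports "HOL-Analysis.Analysis"
begin

definition L2R :: "(real^'n \<Rightarrow> real) set" where
  "L2R = {f. f \<in> borel_measurable lebesgue \<and> integrable lebesgue (\<lambda>t. (f t)\<^sup>2)}"

definition stft :: "(real^'n \<Rightarrow> real) \<Rightarrow> (real^'n \<Rightarrow> real) \<Rightarrow> real^'n \<Rightarrow> real^'n \<Rightarrow> complex" where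
  "stft g f x \<omega> = (LINT t|lebesgue. complex_of_real (f t * g (t - x)) * cis (- 2 * pi * (\<omega> \<bullet> t)))"

definition is_lattice :: "(real^'n) set \<Rightarrow> bool" where
  "is_lattice L \<longleftrightarrow> (\<exists>A :: real^'n^'n. invertible A \<and>
      L = {A *v (\<chi> i. real_of_int (k $ i)) | k :: int^'n. True})"

end

theory Submission
  imports Defs
begin

lemma bl: "f \<in> borel_measurable borel \<Longrightarrow> f \<in> borel_measurable lebesgue"
  by (simp add: measurable_completion measurable_lborel1)

lemma aff_meas:
  fixes c :: "'a::euclidean_space"
  assumes "m = 1 \<or> m = -1"
  shows "(\<lambda>x. c + m *\<^sub>R x) \<in> lebesgue \<rightarrow>\<^sub>M lebesgue"
    and "distr lebesgue lebesgue (\<lambda>x. c + m *\<^sub>R x) = lebesgue"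
proof -
  have eq: "(\<lambda>x. c + (\<Sum>j\<in>Basis. (m * (x \<bullet> j)) *\<^sub>R j)) = (\<lambda>x. c + m *\<^sub>R x)"
    unfolding scaleR_scaleR[symmetric] scaleR_sum_right[symmetric] euclidean_representation by simp
  have m0: "m \<noteq> 0" using assms by auto
  show "(\<lambda>x. c + m *\<^sub>R x) \<in> lebesgue \<rightarrow>\<^sub>M lebesgue"
    using lebesgue_affine_measurable[of "\<lambda>_. m" c] m0 eq by simp
  have "lebesgue = density (distr lebesgue lebesgue (\<lambda>x. c + m *\<^sub>R x)) (\<lambda>_. (\<Prod>j\<in>(Basis::'a set). \<bar>m\<bar>))"
    using lebesgue_affine_euclidean[of "\<lambda>_. m" c] m0 eq by simp
  moreover have "(\<Prod>j\<in>(Basis::'a set). \<bar>m\<bar>) = 1" using assms by auto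
  ultimately show "distr lebesgue lebesgue (\<lambda>x. c + m *\<^sub>R x) = lebesgue"
    by (metis density_1 ennreal_1)
qed

lemma int_aff:
  fixes c :: "'a::euclidean_space" and f :: "'a \<Rightarrow> 'b::{banach, second_countable_topology}"
  assumes "m = 1 \<or> m = -1" and "f \<in> borel_measurable lebesgue"
  shows "integral\<^sup>L lebesgue f = (LINT x|lebesgue. f (c + m *\<^sub>R x))"
  using integral_distr[OF aff_meas(1)[OF assms(1), where c=c] assms(2)] aff_meas(2)[OF assms(1), where c=c]
  by (simp add: o_def)

lemma AE_aff:
  fixes c :: "'a::euclidean_space"
  assumes "m = 1 \<or> m = -1" and "AE x in lebesgue. P x" and "{x. P x} \<in> sets lebesgue"
  shows "AE x in lebesgue. P (c + m *\<^sub>R x)"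
proof -
  have "AE x in distr lebesgue lebesgue (\<lambda>x. c + m *\<^sub>R x). P x"
  proof -
    have eq: "distr lebesgue lebesgue (\<lambda>x. c + m *\<^sub>R x) = lebesgue"
      by (rule aff_meas(2)[OF assms(1)])
    show ?thesis using assms(2) by (simp only: eq)
  qed
  then show ?thesis
    by (subst (asm) AE_distr_iff[OF aff_meas(1)[OF assms(1), where c=c]]) (use assms in auto)
qed

lemma comp_meas:
  fixes g :: "'a::euclidean_space \<Rightarrow> real"
  assumes "m = 1 \<or> m = -1" and "g \<in> borel_measurable lebesgue"
  shows "(\<lambda>x. g (c + m *\<^sub>R x)) \<in> borel_measurable lebesgue"
  using measurable_compose[OF aff_meas(1)[OF assms(1)] assms(2)] by (simp add: o_def)

lemma main_nonzero:
  fixes g :: "real^'n \<Rightarrow> real" and \<Lambda> :: "(real^'n) set"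
  assumes g: "g \<in> L2R" and lat: "is_lattice \<Lambda>"
    and nz: "\<not> (AE t in lebesgue. g t = 0)"
  shows "\<exists>f1 f2. f1 \<in> L2R \<and> f2 \<in> L2R \<and>
           (\<forall>x\<in>\<Lambda>. \<forall>\<omega>. cmod (stft g f1 x \<omega>) = cmod (stft g f2 x \<omega>)) \<and>
           \<not> (AE t in lebesgue. f1 t = f2 t) \<and>
           \<not> (AE t in lebesgue. f1 t = - f2 t)"
proof -
  have gm[measurable]: "g \<in> borel_measurable lebesgue" and gi: "integrable lebesgue (\<lambda>t. (g t)\<^sup>2)"
    using g by (auto simp: L2R_def)
  obtain A :: "real^'n^'n" where inv: "invertible A"
    and L: "\<Lambda> = {A *v (\<chi> i. real_of_int (k $ i)) | k :: int^'n. True}"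
    using lat by (auto simp: is_lattice_def)
  obtain A' :: "real^'n^'n" where AA: "A' ** A = mat 1"
    using inv by (auto simp: invertible_def)
  obtain i0 :: 'n where True by simp
  define \<gamma> where "\<gamma> = axis i0 (1::real) v* A'"
  have key: "\<gamma> \<bullet> (A *v v) = v $ i0" for v
  proof -
    have "\<gamma> \<bullet> (A *v v) = axis i0 1 \<bullet> (A' *v (A *v v))"
      unfolding \<gamma>_def by (rule dot_lmul_matrix)
    also have "\<dots> = axis i0 1 \<bullet> v"
      by (simp add: matrix_vector_mul_assoc AA)
    finally show ?thesis by (simp add: cart_eq_inner_axis inner_commute)
  qed
  have gint: "\<exists>z::int. \<gamma> \<bullet> x = of_int z" if "x \<in> \<Lambda>" for x
    using that key unfolding L by auto
  have "\<gamma> \<bullet> (A *v axis i0 1) = 1" using key by simp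
  then have g0: "\<gamma> \<noteq> 0" by auto
  define \<sigma> where "\<sigma> t = sin (2*pi*(\<gamma> \<bullet> t))" for t :: "real^'n"
  have \<sigma>m[measurable]: "\<sigma> \<in> borel_measurable lebesgue"
    unfolding \<sigma>_def by (intro bl) measurable
  have \<sigma>odd: "\<sigma> (x - s) = - \<sigma> s" if xL: "x \<in> \<Lambda>" for x s
  proof -
    obtain z :: int where z: "\<gamma> \<bullet> x = of_int z" using gint[OF xL] by blast
    have "\<sigma> (x - s) = sin (2 * pi * real_of_int z - 2*pi*(\<gamma> \<bullet> s))"
      unfolding \<sigma>_def by (simp add: inner_diff_right z algebra_simps)
    also have "\<dots> = - \<sigma> s"
      unfolding \<sigma>_def sin_diff by (simp add: sin_int_2pin cos_int_2pin)
    finally show ?thesis .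
  qed
  have \<sigma>b: "\<bar>\<sigma> t\<bar> \<le> 1" for t unfolding \<sigma>_def by simp
  have AE\<sigma>: "AE t in lebesgue. \<sigma> t \<noteq> 0"
  proof -
    have sub: "{t. \<sigma> t = 0} \<subseteq> \<Union> (range (\<lambda>i::int. {t. \<gamma> \<bullet> t = real_of_int i / 2}))"
    proof
      fix t assume "t \<in> {t. \<sigma> t = 0}"
      then obtain i :: int where "2*pi*(\<gamma> \<bullet> t) = real_of_int i * pi"
        unfolding \<sigma>_def by (auto simp: sin_zero_iff_int2)
      then have "\<gamma> \<bullet> t = real_of_int i / 2" by (simp add: field_simps)
      then show "t \<in> \<Union> (range (\<lambda>i::int. {t. \<gamma> \<bullet> t = real_of_int i / 2}))" by blast
    qed
    have "negligible (\<Union> (range (\<lambda>i::int. {t. \<gamma> \<bullet> t = real_of_int i / 2})))"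
    proof (rule negligible_countable_Union)
      fix S assume "S \<in> range (\<lambda>i::int. {t. \<gamma> \<bullet> t = real_of_int i / 2})"
      then obtain i :: int where "S = {t. \<gamma> \<bullet> t = real_of_int i / 2}" by blast
      then show "negligible S" using negligible_hyperplane[of \<gamma> "real_of_int i / 2"] g0 by simp
    qed simp
    then have "negligible {t. \<sigma> t = 0}" using sub negligible_subset by blast
    then have "{t. \<sigma> t = 0} \<in> null_sets lebesgue" by (simp add: negligible_iff_null_sets)
    from AE_not_in[OF this] show ?thesis by simp
  qed
  define f1 where "f1 t = g (-t) * (1 + \<sigma> t)" for t
  define f2 where "f2 t = g (-t) * (1 - \<sigma> t)" for t
  have gr[measurable]: "(\<lambda>t. g (-t)) \<in> borel_measurable lebesgue"
    using comp_meas[of "-1" g 0] gm by simp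
  have gri: "integrable lebesgue (\<lambda>t. (g (-t))\<^sup>2)"
  proof -
    have "integrable (distr lebesgue lebesgue (\<lambda>x. 0 + (-1) *\<^sub>R x)) (\<lambda>t. (g t)\<^sup>2)"
    proof -
      have e: "distr lebesgue lebesgue (\<lambda>x::real^'n. 0 + (-1) *\<^sub>R x) = lebesgue"
        by (rule aff_meas(2)) simp
      show ?thesis using gi by (simp only: e)
    qed
    then show ?thesis
      by (subst (asm) integrable_distr_eq[OF aff_meas(1)[of "-1" 0]]) auto
  qed
  have L2: "(\<lambda>t. g (-t) * (1 + e * \<sigma> t)) \<in> L2R" if e: "e = 1 \<or> e = -1" for e
  proof -
    have "integrable lebesgue (\<lambda>t. (g (-t) * (1 + e * \<sigma> t))\<^sup>2)"
    proof (rule Bochner_Integration.integrable_bound[OF integrable_mult_right[OF gri, of 4]])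
      show "(\<lambda>t. (g (-t) * (1 + e * \<sigma> t))\<^sup>2) \<in> borel_measurable lebesgue" by measurable
      show "AE x in lebesgue. norm ((g (-x) * (1 + e * \<sigma> x))\<^sup>2) \<le> norm (4 * (g (-x))\<^sup>2)"
      proof (intro AE_I2)
        fix x
        have "\<bar>1 + e * \<sigma> x\<bar> \<le> 2" using e \<sigma>b[of x] by auto
        then have "(1 + e * \<sigma> x)\<^sup>2 \<le> 4"
          by (metis abs_le_square_iff power2_abs abs_numeral power2_eq_square numeral_times_numeral semiring_norm(12) semiring_norm(13) num_double)
        then have "(g (-x))\<^sup>2 * (1 + e * \<sigma> x)\<^sup>2 \<le> (g (-x))\<^sup>2 * 4"
          by (intro mult_left_mono) auto
        then show "norm ((g (-x) * (1 + e * \<sigma> x))\<^sup>2) \<le> norm (4 * (g (-x))\<^sup>2)"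
          by (simp add: power_mult_distrib mult.commute)
      qed
    qed
    moreover have "(\<lambda>t. g (-t) * (1 + e * \<sigma> t)) \<in> borel_measurable lebesgue" by measurable
    ultimately show ?thesis by (simp add: L2R_def)
  qed
  have f1L: "f1 \<in> L2R" using L2[of 1] by (simp add: f1_def[abs_def])
  have f2L: "f2 \<in> L2R" using L2[of "-1"] by (simp add: f2_def[abs_def])
  have gnz: "\<not> (AE t in lebesgue. g (-t) = 0)"
  proof
    assume a0: "AE t in lebesgue. g (-t) = 0"
    have "AE t in lebesgue. g (- (0 + (-1) *\<^sub>R t)) = 0"
    proof (rule AE_aff[where m="-1" and P="\<lambda>t. g (-t) = 0" and c=0])
      have "{t \<in> space lebesgue. g (-t) = 0} \<in> sets lebesgue" by measurable
      then show "{t. g (-t) = 0} \<in> sets lebesgue" by simp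
    qed (use a0 in auto)
    then show False using nz by simp
  qed
  have ne1: "\<not> (AE t in lebesgue. f1 t = f2 t)"
  proof
    assume "AE t in lebesgue. f1 t = f2 t"
    then have "AE t in lebesgue. g (-t) = 0"
      using AE\<sigma> by eventually_elim (auto simp: f1_def f2_def algebra_simps)
    then show False using gnz by simp
  qed
  have ne2: "\<not> (AE t in lebesgue. f1 t = - f2 t)"
  proof
    assume "AE t in lebesgue. f1 t = - f2 t"
    then have "AE t in lebesgue. g (-t) = 0"
      by eventually_elim (auto simp: f1_def f2_def algebra_simps)
    then show False using gnz by simp
  qed
  have mod: "cmod (stft g f1 x \<omega>) = cmod (stft g f2 x \<omega>)" if x: "x \<in> \<Lambda>" for x \<omega>
  proof -
    define F where "F t = complex_of_real (f1 t * g (t - x)) * cis (- 2 * pi * (\<omega> \<bullet> t))" for t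
    have gx[measurable]: "(\<lambda>t. g (t - x)) \<in> borel_measurable lebesgue"
      using comp_meas[of 1 g "-x"] gm by simp
    have cm[measurable]: "(\<lambda>t. cis (- 2 * pi * (\<omega> \<bullet> t))) \<in> borel_measurable lebesgue"
      by (intro bl borel_measurable_continuous_onI continuous_intros)
    have Fm: "F \<in> borel_measurable lebesgue"
      unfolding F_def f1_def by measurable
    have pt: "F (x + (-1) *\<^sub>R s) = cis (- 2 * pi * (\<omega> \<bullet> x)) *
               cnj (complex_of_real (f2 s * g (s - x)) * cis (- 2 * pi * (\<omega> \<bullet> s)))" for s
    proof -
      have "f1 (x - s) * g (x - s - x) = f2 s * g (s - x)"
        unfolding f1_def f2_def using \<sigma>odd[OF x, of s] by (simp add: algebra_simps)
      moreover have "cis (- 2 * pi * (\<omega> \<bullet> (x - s))) = cis (- 2 * pi * (\<omega> \<bullet> x)) * cnj (cis (- 2 * pi * (\<omega> \<bullet> s)))"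
      proof -
        have "cis (- 2 * pi * (\<omega> \<bullet> x)) * cnj (cis (- 2 * pi * (\<omega> \<bullet> s)))
              = cis (- 2 * pi * (\<omega> \<bullet> x) + - (- 2 * pi * (\<omega> \<bullet> s)))"
          by (simp only: cis_cnj cis_mult)
        also have "- 2 * pi * (\<omega> \<bullet> x) + - (- 2 * pi * (\<omega> \<bullet> s)) = - 2 * pi * (\<omega> \<bullet> (x - s))"
          by (simp add: inner_diff_right algebra_simps)
        finally show ?thesis by simp
      qed
      ultimately show ?thesis
        unfolding F_def by (simp add: algebra_simps)
    qed
    have "stft g f1 x \<omega> = integral\<^sup>L lebesgue F"
      unfolding stft_def F_def by simp
    also have "\<dots> = (LINT s|lebesgue. F (x + (-1) *\<^sub>R s))"
      by (rule int_aff[OF _ Fm]) simp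
    also have "\<dots> = cis (- 2 * pi * (\<omega> \<bullet> x)) * cnj (stft g f2 x \<omega>)"
      unfolding pt stft_def integral_mult_right_zero by (subst Bochner_Integration.integral_cnj) (rule refl)
    finally show ?thesis by (simp add: norm_mult)
  qed
  show ?thesis using f1L f2L ne1 ne2 mod by blast
qed

lemma main_zero:
  fixes g :: "real^'n \<Rightarrow> real" and \<Lambda> :: "(real^'n) set"
  assumes g: "g \<in> L2R" and z: "AE t in lebesgue. g t = 0"
  shows "\<exists>f1 f2. f1 \<in> L2R \<and> f2 \<in> L2R \<and>
           (\<forall>x\<in>\<Lambda>. \<forall>\<omega>. cmod (stft g f1 x \<omega>) = cmod (stft g f2 x \<omega>)) \<and>
           \<not> (AE t in lebesgue. f1 t = f2 t) \<and>
           \<not> (AE t in lebesgue. f1 t = - f2 t)"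
proof -
  have gm[measurable]: "g \<in> borel_measurable lebesgue"
    using g by (auto simp: L2R_def)
  define B where "B = cbox (0::real^'n) One"
  have Bs[measurable]: "B \<in> sets lebesgue" and Bf: "emeasure lebesgue B < \<infinity>"
    using lmeasurable_cbox[of 0 One] unfolding B_def fmeasurable_def by auto
  define f1 where "f1 = (\<lambda>t. indicator B t :: real)"
  have f1L: "f1 \<in> L2R"
  proof -
    have "(\<lambda>t. (f1 t)\<^sup>2) = indicator B" unfolding f1_def by (auto simp: indicator_def fun_eq_iff)
    then have "integrable lebesgue (\<lambda>t. (f1 t)\<^sup>2)" using Bs Bf by simp
    moreover have "f1 \<in> borel_measurable lebesgue" unfolding f1_def by measurable
    ultimately show ?thesis by (simp add: L2R_def)
  qed
  have f2L: "(\<lambda>_. 0) \<in> L2R" by (simp add: L2R_def)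
  have st0: "stft g f x \<omega> = 0" for f x \<omega>
  proof -
    have "AE t in lebesgue. g (- x + 1 *\<^sub>R t) = 0"
    proof (rule AE_aff[where m=1 and P="\<lambda>t. g t = 0" and c="-x"])
      have "{t \<in> space lebesgue. g t = 0} \<in> sets lebesgue" by measurable
      then show "{t. g t = 0} \<in> sets lebesgue" by simp
    qed (use z in auto)
    then have "AE t in lebesgue. complex_of_real (f t * g (t - x)) * cis (- 2 * pi * (\<omega> \<bullet> t)) = 0"
      by eventually_elim simp
    then show ?thesis unfolding stft_def by (rule integral_eq_zero_AE)
  qed
  have nB: "\<not> (AE t in lebesgue. f1 t = 0)"
  proof
    assume "AE t in lebesgue. f1 t = 0"
    then have "AE t in lebesgue. t \<notin> B" by eventually_elim (auto simp: f1_def)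
    then have "B \<in> null_sets lebesgue" using AE_iff_null_sets[OF Bs] by simp
    then have "negligible B" by (simp add: negligible_iff_null_sets)
    then show False unfolding B_def negligible_interval by (simp add: box_ne_empty)
  qed
  show ?thesis
    apply (rule exI[of _ f1], rule exI[of _ "\<lambda>_. 0"])
    using f1L f2L st0 nB by simp
qed

theorem theorem1p5:
  fixes g :: "real^'n \<Rightarrow> real" and \<L> :: "((real^'n) \<times> (real^'n)) set"
  assumes "g \<in> L2R"
    and "(\<exists>\<Lambda>. is_lattice \<Lambda> \<and> \<L> = \<Lambda> \<times> UNIV) \<or>
         (\<exists>\<A> \<B>. is_lattice \<A> \<and> is_lattice \<B> \<and> \<L> = \<A> \<times> \<B>)"
  shows "\<exists>f1 f2. f1 \<in> L2R \<and> f2 \<in> L2R \<and>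
           (\<forall>(x, \<omega>) \<in> \<L>. cmod (stft g f1 x \<omega>) = cmod (stft g f2 x \<omega>)) \<and>
           \<not> (AE t in lebesgue. f1 t = f2 t) \<and>
           \<not> (AE t in lebesgue. f1 t = - f2 t)"
proof -
  obtain \<Lambda> where lat: "is_lattice \<Lambda>" and sub: "\<L> \<subseteq> \<Lambda> \<times> UNIV"
    using assms(2) by blast
  have "\<exists>f1 f2. f1 \<in> L2R \<and> f2 \<in> L2R \<and>
           (\<forall>x\<in>\<Lambda>. \<forall>\<omega>. cmod (stft g f1 x \<omega>) = cmod (stft g f2 x \<omega>)) \<and>
           \<not> (AE t in lebesgue. f1 t = f2 t) \<and>
           \<not> (AE t in lebesgue. f1 t = - f2 t)"
  proof (cases "AE t in lebesgue. g t = 0")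
    case True
    then show ?thesis using main_zero[OF assms(1)] by blast
  next
    case False
    then show ?thesis using main_nonzero[OF assms(1) lat] by blast
  qed
  then show ?thesis using sub by fast
qed

end
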